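(* Fix a question $q$ and a reference answer $a^*$. Let $\mathcal{S}$ (solutions) and $\mathcal{A}$ (answers) be countable sets, let $\pi_\theta(\cdot\mid q)$ be a probability distribution on $\mathcal{S}$, and for each $s\in\mathcal{S}$ let $\pi_\theta(\cdot\mid s,q)$ be a probability distribution on $\mathcal{A}$, so that the joint law of $(S,A)$ is $\pi_\theta(a,s\mid q)=\pi_\theta(s\mid q)\,\pi_\theta(a\mid s,q)$. Assume $\Pr(A=a^* )=\sum_{s}\pi_\theta(s\mid q)\pi_\theta(a^*\mid s,q)>0$. Define the conditional expectation reward $$\rho(a^*,a^* )=\mathbb{E}_{s'\sim\pi_\theta(\cdot\mid q)}\big[\pi_\theta(a^*\mid s',q)\,\big|\,A=a^*\big]=\sum_{s'\in\mathcal{S}}\pi_\theta(s'\mid q,a^* )\,\pi_\theta(a^*\mid s',q),$$ where $\pi_\theta(s'\mid q,a^* )=\dfrac{\pi_\theta(s'\mid q)\pi_\theta(a^*\mid s',q)}{\sum_{s''}\pi_\theta(s''\mid q)\pi_\theta(a^*\mid s'',q)}$. Then $$\rho(a^*,a^* )\;\ge\;\mathbb{E}_{s\sim\pi_\theta(\cdot\mid q)}\big[\pi_\theta(a^*\mid s,q)\big],$$ with equality if and only if $\pi_\theta(a^*\mid s,q)$ is constant over all $s$ with $\pi_\theta(s\mid q)>0$.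
   Context: A policy $\pi_\theta$ generates, given a question $q$, a solution $s$ and then an answer $a$; the conditional expectation reward (CER) of a generated answer $a$ with respect to a reference answer $a^*$ is $\rho(a,a^* )=\sum_{s'}\pi_\theta(s'\mid q,a)\,\pi_\theta(a^*\mid s',q)$, defined for answers $a$ with positive marginal probability under the policy. *)

theory Defs
  imports "HOL-Probability.Probability"
begin

text \<open>Policy: Spol = pi(. | q), a pmf on solutions; Apol s = pi(. | s, q), a pmf on answers.\<close>

definition marg_prob :: "'s pmf \<Rightarrow> ('s \<Rightarrow> 'a pmf) \<Rightarrow> 'a \<Rightarrow> real" where
  "marg_prob Spol Apol a = (\<Sum>\<^sub>\<infinity>s. pmf Spol s * pmf (Apol s) a)"

definition post :: "'s pmf \<Rightarrow> ('s \<Rightarrow> 'a pmf) \<Rightarrow> 'a \<Rightarrow> 's \<Rightarrow> real" where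
  "post Spol Apol a s = pmf Spol s * pmf (Apol s) a / marg_prob Spol Apol a"

definition cer :: "'s pmf \<Rightarrow> ('s \<Rightarrow> 'a pmf) \<Rightarrow> 'a \<Rightarrow> 'a \<Rightarrow> real" where
  "cer Spol Apol a astar = (\<Sum>\<^sub>\<infinity>s. post Spol Apol a s * pmf (Apol s) astar)"

end

theory Submission
  imports Defs
begin

theorem theorem1:
  fixes Spol :: "'s::countable pmf" and Apol :: "'s \<Rightarrow> 'a::countable pmf" and astar :: 'a
  assumes "marg_prob Spol Apol astar > 0"
  shows "cer Spol Apol astar astar \<ge> (\<Sum>\<^sub>\<infinity>s. pmf Spol s * pmf (Apol s) astar) \<and>
         (cer Spol Apol astar astar = (\<Sum>\<^sub>\<infinity>s. pmf Spol s * pmf (Apol s) astar)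
         \<longleftrightarrow> (\<exists>c. \<forall>s. pmf Spol s > 0 \<longrightarrow> pmf (Apol s) astar = c))"
proof -
  define p where "p = pmf Spol"
  define f where "f = (\<lambda>s. pmf (Apol s) astar)"
  define M where "M = (\<Sum>\<^sub>\<infinity>s. p s * f s)"
  define A2 where "A2 = (\<Sum>\<^sub>\<infinity>s. p s * f s ^ 2)"
  have M0: "M > 0" using assms unfolding M_def marg_prob_def p_def f_def by simp
  have p0: "\<And>s. p s \<ge> 0" and f0: "\<And>s. f s \<ge> 0" and f1: "\<And>s. f s \<le> 1"
    by (auto simp: p_def f_def pmf_le_1)
  have abs: "Infinite_Set_Sum.abs_summable_on (pmf Spol) UNIV" by (rule pmf_abs_summable)
  have Sp: "p summable_on UNIV"
    unfolding p_def
    by (rule summable_on_iff_abs_summable_on_real[THEN iffD2, OF abs_summable_equivalent[THEN iffD2, OF abs]])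
  have e: "infsetsum (pmf Spol) UNIV = infsum (pmf Spol) UNIV" by (rule infsetsum_infsum[OF abs])
  have e1: "infsetsum (pmf Spol) UNIV = 1" by (rule infsetsum_pmf_eq_1) simp
  have Ip: "infsum p UNIV = 1" unfolding p_def using e e1 by simp
  have Spf: "(\<lambda>s. p s * f s) summable_on UNIV"
    by (rule summable_on_comparison_test[OF Sp]) (auto intro: mult_left_le[OF f1 p0] simp: p0 f0)
  have Spf2: "(\<lambda>s. p s * f s ^ 2) summable_on UNIV"
    by (rule summable_on_comparison_test[OF Sp])
       (auto intro!: mult_left_le[OF _ p0] simp: p0 f0 power_le_one f1)
  have h1: "((\<lambda>s. p s * f s ^ 2) has_sum A2) UNIV" using Spf2 A2_def by (simp add: has_sum_infsum)
  have h2: "((\<lambda>s. (-2*M) * (p s * f s)) has_sum ((-2*M) * M)) UNIV"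
    using Spf M_def by (intro has_sum_cmult_right) (simp add: has_sum_infsum)
  have h3: "((\<lambda>s. M^2 * p s) has_sum (M^2 * 1)) UNIV"
    using Sp Ip by (intro has_sum_cmult_right) (metis has_sum_infsum)
  have "((\<lambda>s. p s * f s ^ 2 + (-2*M) * (p s * f s) + M^2 * p s) has_sum (A2 + (-2*M)*M + M^2*1)) UNIV"
    by (intro has_sum_add h1 h2 h3)
  moreover have "(\<lambda>s. p s * f s ^ 2 + (-2*M) * (p s * f s) + M^2 * p s) = (\<lambda>s. p s * (f s - M)^2)"
    by (simp add: fun_eq_iff power2_eq_square algebra_simps)
  moreover have "A2 + (-2*M)*M + M^2*1 = A2 - M^2" by (simp add: power2_eq_square)
  ultimately have hV: "((\<lambda>s. p s * (f s - M)^2) has_sum (A2 - M^2)) UNIV"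
    by simp
  have cer: "cer Spol Apol astar astar = A2 / M"
  proof -
    have "cer Spol Apol astar astar = (\<Sum>\<^sub>\<infinity>s. (p s * f s ^ 2) * (1/M))"
      unfolding cer_def post_def marg_prob_def p_def f_def M_def
      by (simp add: power2_eq_square mult.assoc)
    also have "\<dots> = A2 * (1/M)" unfolding A2_def by (rule infsum_cmult_left) (use Spf2 in auto)
    finally show ?thesis by simp
  qed
  have Vnn: "A2 - M^2 \<ge> 0" using hV by (rule has_sum_nonneg) (simp add: p0)
  have ge: "A2 / M \<ge> M" using Vnn M0 by (simp add: field_simps power2_eq_square)
  have eqiff: "A2 / M = M \<longleftrightarrow> A2 - M^2 = 0" using M0
    by (auto simp: field_simps power2_eq_square)
  have "A2 - M^2 = 0 \<longleftrightarrow> (\<exists>c. \<forall>s. p s > 0 \<longrightarrow> f s = c)"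
  proof
    assume V: "A2 - M^2 = 0"
    have "\<forall>s. p s > 0 \<longrightarrow> f s = M"
    proof (intro allI impI)
      fix s assume ps: "p s > 0"
      have i: "infsum (\<lambda>s. p s * (f s - M)^2) UNIV \<le> 0" using V infsumI[OF hV] by simp
      have su: "(\<lambda>s. p s * (f s - M)^2) summable_on UNIV" using hV summable_on_def by blast
      have "p s * (f s - M)^2 = 0"
        by (rule nonneg_infsum_le_0D[OF i su]) (simp_all add: p0)
      thus "f s = M" using ps by simp
    qed
    thus "\<exists>c. \<forall>s. p s > 0 \<longrightarrow> f s = c" by blast
  next
    assume "\<exists>c. \<forall>s. p s > 0 \<longrightarrow> f s = c"
    then obtain c where c: "\<And>s. p s > 0 \<Longrightarrow> f s = c" by blast
    have e1: "p s * f s = c * p s" for s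
      using c[of s] p0[of s] by (cases "p s > 0") auto
    have e2: "p s * f s ^ 2 = c^2 * p s" for s
      using c[of s] p0[of s] by (cases "p s > 0") auto
    have "M = c" unfolding M_def e1 by (subst infsum_cmult_right) (use Sp Ip in auto)
    moreover have "A2 = c^2" unfolding A2_def e2 by (subst infsum_cmult_right) (use Sp Ip in auto)
    ultimately show "A2 - M^2 = 0" by simp
  qed
  thus ?thesis using ge eqiff cer
    unfolding M_def p_def f_def by simp
qed

end
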